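(* Let $\mathcal{C}\le\mathbb{F}_q^n$ be a linear code of even length $n$ with $q\neq 2$, and suppose $W_\mathcal{C}(x)=(x^2+a)^{n/2}$ for some $a\in\mathbb{R}\setminus\{0\}$. Then $a=q-1$ and $\mathcal{C}$ is monomially equivalent to $\bigoplus_{i=1}^{n/2}\langle(1,1)\rangle_{\mathbb{F}_q}$.
   Context: $W_\mathcal{C}(x)=\sum_{c\in\mathcal{C}}x^{n-\mathrm{wt}(c)}$, where $\mathrm{wt}(c)$ is the number of nonzero coordinates of $c$. Two codes in $\mathbb{F}_q^n$ are monomially equivalent if one is the image of the other under $v\mapsto DPv$ with $D$ an invertible diagonal matrix and $P$ a permutation matrix. $\bigoplus_{i=1}^{n/2}\langle(1,1)\rangle_{\mathbb{F}_q}\le\mathbb{F}_q^n$ is the code with block-diagonal generator matrix consisting of $n/2$ blocks $(1\ 1)$. *)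

theory Defs
  imports "HOL-Library.Cardinality" "HOL-Computational_Algebra.Polynomial" "HOL-Combinatorics.Permutations"
begin

text \<open>Vectors of F_q^n are represented as functions nat => 'a vanishing outside {..<n}.\<close>

definition Fqn :: "nat \<Rightarrow> (nat \<Rightarrow> 'a::field) set" where
  "Fqn n = {v. \<forall>i\<ge>n. v i = 0}"

definition linear_code :: "nat \<Rightarrow> (nat \<Rightarrow> 'a::field) set \<Rightarrow> bool" where
  "linear_code n C \<longleftrightarrow> C \<subseteq> Fqn n \<and> (\<lambda>_. 0) \<in> C
     \<and> (\<forall>u\<in>C. \<forall>v\<in>C. (\<lambda>i. u i + v i) \<in> C)
     \<and> (\<forall>c. \<forall>v\<in>C. (\<lambda>i. c * v i) \<in> C)"

definition wt :: "nat \<Rightarrow> (nat \<Rightarrow> 'a::zero) \<Rightarrow> nat" where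
  "wt n c = card {i\<in>{..<n}. c i \<noteq> 0}"

definition weight_enum :: "nat \<Rightarrow> (nat \<Rightarrow> 'a::zero) set \<Rightarrow> real poly" where
  "weight_enum n C = (\<Sum>c\<in>C. monom 1 (n - wt n c))"

definition monomially_equivalent :: "nat \<Rightarrow> (nat \<Rightarrow> 'a::field) set \<Rightarrow> (nat \<Rightarrow> 'a) set \<Rightarrow> bool" where
  "monomially_equivalent n C1 C2 \<longleftrightarrow>
     (\<exists>\<sigma> d. \<sigma> permutes {..<n} \<and> (\<forall>i<n. d i \<noteq> (0::'a)) \<and>
        C2 = (\<lambda>v. \<lambda>i. if i < n then d i * v (\<sigma> i) else 0) ` C1)"

text \<open>The code with block-diagonal generator matrix of n/2 blocks (1 1): codewords m G,
  whose j-th coordinate (j < n) is m (j div 2).\<close>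
definition rep_sum_code :: "nat \<Rightarrow> (nat \<Rightarrow> 'a::field) set" where
  "rep_sum_code n = {v. \<exists>m::nat \<Rightarrow> 'a. v = (\<lambda>j. if j < n then m (j div 2) else 0)}"

end

theory Submission
  imports Defs
begin


lemma coeff_P_mult:
  "coeff ([:a,0,1:] * Q) k = a * coeff Q k + (if 2 \<le> k then coeff Q (k-2) else (0::real))"
proof -
  have "[:a,0,1:] * Q = smult a Q + monom 1 2 * Q"
    by (simp add: monom_altdef power2_eq_square algebra_simps) 
  then show ?thesis by (simp add: coeff_monom_mult)
qed

lemma coeff_P_pow_Suc:
  "coeff ([:a,0,1:] ^ Suc N) k = a * coeff ([:a,0,1:] ^ N) k + (if 2 \<le> k then coeff ([:a,0,1:] ^ N) (k-2) else (0::real))"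
  by (simp only: power_Suc coeff_P_mult)

lemma coeff_P_pow_odd: "odd k \<Longrightarrow> coeff ([:a,0,1:] ^ N) k = (0::real)"
proof (induction N arbitrary: k)
  case 0 then show ?case by (cases k) auto
next
  case (Suc N)
  have "odd (k-2)" if "2 \<le> k" using Suc.prems that by auto
  then show ?case unfolding coeff_P_pow_Suc using Suc by simp
qed

lemma coeff_P_pow_high: "k > 2*N \<Longrightarrow> coeff ([:a,0,1:] ^ N) k = (0::real)"
proof (induction N arbitrary: k)
  case 0 then show ?case by (cases k) auto
next
  case (Suc N)
  then show ?case unfolding coeff_P_pow_Suc by simp
qed

lemma coeff_P_pow_top: "coeff ([:a,0,1:] ^ N) (2*N) = (1::real) \<and> coeff ([:a,0,1:] ^ Suc N) (2*N) = real (Suc N) * a"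
proof (induction N)
  case 0 then show ?case by simp
next
  case (Suc N)
  have h: "coeff ([:a,0,1:] ^ N) (2*N+2) = 0" by (rule coeff_P_pow_high) simp
  have 1: "coeff ([:a,0,1:] ^ Suc N) (2*Suc N) = 1"
    unfolding coeff_P_pow_Suc using Suc h by simp
  have 2: "coeff ([:a,0,1:] ^ Suc (Suc N)) (2*Suc N) = a * 1 + real (Suc N) * a"
  proof -
    have IH2: "coeff ([:a,0,1:] ^ Suc N) (2*N) = real (Suc N) * a" using Suc.IH by blast
    have e: "2 * Suc N - 2 = 2*N" by simp
    show ?thesis unfolding coeff_P_pow_Suc[of a "Suc N"] e using 1 IH2 by simp
  qed
  show ?case using 1 2 by (simp add: algebra_simps)
qed

lemma pderiv_sum': "finite A \<Longrightarrow> pderiv (sum f A) = (\<Sum>x\<in>A. pderiv (f x))"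
  by (induction A rule: finite_induct) (auto simp: pderiv_add)


lemma finite_Fqn: "finite (Fqn n :: (nat \<Rightarrow> 'a::{finite,field}) set)"
proof -
  have inj: "inj_on (\<lambda>v. map v [0..<n]) (Fqn n :: (nat \<Rightarrow> 'a) set)"
  proof (rule inj_onI)
    fix u v :: "nat \<Rightarrow> 'a" assume u: "u \<in> Fqn n" and v: "v \<in> Fqn n" and e: "map u [0..<n] = map v [0..<n]"
    show "u = v"
    proof
      fix i show "u i = v i"
      proof (cases "i < n")
        case True then show ?thesis using e by (simp add: map_eq_conv)
      next
        case False then show ?thesis using u v by (simp add: Fqn_def)
      qed
    qed
  qed
  have "(\<lambda>v. map v [0..<n]) ` (Fqn n :: (nat \<Rightarrow> 'a) set) \<subseteq> {xs. set xs \<subseteq> UNIV \<and> length xs = n}" by auto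
  moreover have "finite {xs. set xs \<subseteq> (UNIV::'a set) \<and> length xs = n}"
    by (rule finite_lists_length_eq) simp
  ultimately have "finite ((\<lambda>v. map v [0..<n]) ` (Fqn n :: (nat \<Rightarrow> 'a) set))" by (rule finite_subset)
  then show ?thesis using finite_imageD inj by blast
qed

lemma wt_le: "wt n c \<le> n"
  unfolding wt_def by (rule order_trans[OF card_mono[of "{..<n}"]]) auto

lemma coeff_weight_enum:
  assumes "finite C"
  shows "coeff (weight_enum n C) k = real (card {c\<in>C. n - wt n c = k})"
proof -
  have "coeff (weight_enum n C) k = (\<Sum>c\<in>C. if n - wt n c = k then 1 else 0)"
    unfolding weight_enum_def coeff_sum by (simp add: coeff_monom)
  also have "\<dots> = real (card {c\<in>C. n - wt n c = k})"
    using assms by (simp add: sum.If_cases Int_def conj_commute)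
  finally show ?thesis .
qed

lemma poly_weight_enum_1:
  "poly (weight_enum n C) 1 = real (card C)"
  unfolding weight_enum_def poly_sum by (simp add: poly_monom)

lemma pderiv_weight_enum_1:
  assumes "finite C"
  shows "poly (pderiv (weight_enum n C)) 1 = real (\<Sum>c\<in>C. n - wt n c)"
  unfolding weight_enum_def pderiv_sum'[OF assms] poly_sum by (simp add: pderiv_monom poly_monom)


lemma enum_facts:
  fixes C :: "(nat \<Rightarrow> 'a::{finite,field}) set" and a :: real
  assumes fin: "finite C" and ev: "n = 2*N" and N: "N > 0" and a: "a \<noteq> 0"
    and H: "weight_enum n C = [:a, 0, 1:] ^ N"
  shows "\<exists>c\<in>C. wt n c = n"
    and "\<And>c. c \<in> C \<Longrightarrow> even (wt n c)"
    and "real (card {c\<in>C. wt n c = 2}) = real N * a"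
    and "real (card C) = (1+a)^N"
    and "real (\<Sum>c\<in>C. n - wt n c) = real N * 2 * (1+a)^(N-1)"
proof -
  have c0: "real (card {c\<in>C. n - wt n c = 0}) = a^N"
    using coeff_weight_enum[OF fin, of n 0] H by (simp add: coeff_0_power)
  then have "card {c\<in>C. n - wt n c = 0} \<noteq> 0" using a by (metis of_nat_0 power_eq_0_iff)
  then have "{c\<in>C. n - wt n c = 0} \<noteq> {}" by (metis card.empty)
  then show "\<exists>c\<in>C. wt n c = n" using wt_le by (metis (mono_tags, lifting) diff_is_0_eq empty_Collect_eq le_antisym)
next
  fix c assume c: "c \<in> C"
  show "even (wt n c)"
  proof (rule ccontr)
    assume o: "odd (wt n c)"
    have "odd (n - wt n c)" using o ev wt_le[of n c] by (simp add: even_diff_nat)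
    then have "real (card {d\<in>C. n - wt n d = n - wt n c}) = 0"
      using coeff_weight_enum[OF fin, of n "n - wt n c"] H coeff_P_pow_odd by metis
    then have "{d\<in>C. n - wt n d = n - wt n c} = {}" using fin by simp
    then show False using c by auto
  qed
next
  have e: "{c\<in>C. n - wt n c = n - 2} = {c\<in>C. wt n c = 2}"
  proof -
    have "n - wt n c = n - 2 \<longleftrightarrow> wt n c = 2" for c using wt_le[of n c] ev N by linarith
    then show ?thesis by blast
  qed
  have "coeff ([:a,0,1:] ^ Suc (N-1)) (2*(N-1)) = real (Suc (N-1)) * a"
    using coeff_P_pow_top by blast
  then have "coeff ([:a,0,1:] ^ N) (n-2) = real N * a" using ev N by (simp add: right_diff_distrib')
  then show "real (card {c\<in>C. wt n c = 2}) = real N * a"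
    using coeff_weight_enum[OF fin, of n "n-2"] H e by simp
next
  show "real (card C) = (1+a)^N"
    using poly_weight_enum_1[of n C] H by (simp add: poly_power add.commute)
next
  have "pderiv [:a,0,1::real:] = [:0,2:]" by (simp add: pderiv_pCons)
  then have "poly (pderiv ([:a,0,1:] ^ N)) 1 = real N * ((1+a)^(N-1) * 2)"
    by (simp add: pderiv_power poly_power add.commute)
  then show "real (\<Sum>c\<in>C. n - wt n c) = real N * 2 * (1+a)^(N-1)"
    using pderiv_weight_enum_1[OF fin, of n] H by simp
qed


lemma lc_Fqn: "linear_code n C \<Longrightarrow> c \<in> C \<Longrightarrow> n \<le> i \<Longrightarrow> c i = 0"
  unfolding linear_code_def Fqn_def by auto

lemma lc_add: "linear_code n C \<Longrightarrow> u \<in> C \<Longrightarrow> v \<in> C \<Longrightarrow> (\<lambda>i. u i + v i) \<in> C"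
  unfolding linear_code_def by auto

lemma lc_smult: "linear_code n C \<Longrightarrow> v \<in> C \<Longrightarrow> (\<lambda>i. c * v i) \<in> C"
  unfolding linear_code_def by auto

lemma lc_zero: "linear_code n C \<Longrightarrow> (\<lambda>i. 0) \<in> C"
  unfolding linear_code_def by auto

lemma lc_lin: "linear_code n C \<Longrightarrow> u \<in> C \<Longrightarrow> v \<in> C \<Longrightarrow> (\<lambda>i. u i + c * v i) \<in> C"
  using lc_add lc_smult by blast

lemma lc_sub: "linear_code n C \<Longrightarrow> u \<in> C \<Longrightarrow> v \<in> C \<Longrightarrow> (\<lambda>i. u i - c * v i) \<in> C"
  using lc_lin[of n C u v "-c"] by simp

lemma lc_sum:
  assumes lc: "linear_code n C" and fin: "finite L" and f: "\<And>l. l \<in> L \<Longrightarrow> f l \<in> C"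
  shows "(\<lambda>i. \<Sum>l\<in>L. f l i) \<in> C"
  using fin f
proof (induction L rule: finite_induct)
  case empty then show ?case using lc_zero[OF lc] by simp
next
  case (insert x F)
  have "(\<lambda>i. f x i + (\<Sum>l\<in>F. f l i)) \<in> C"
    using insert lc_add[OF lc, of "f x" "\<lambda>i. \<Sum>l\<in>F. f l i"] by simp
  then show ?case using insert by simp
qed

lemma lc_fiber:
  fixes C :: "(nat \<Rightarrow> 'a::{finite,field}) set"
  assumes lc: "linear_code n C" and u: "u \<in> C" "u i \<noteq> 0"
  shows "card C = CARD('a) * card {c\<in>C. c i = 0}"
proof -
  let ?Z = "{c\<in>C. c i = 0}"
  let ?f = "\<lambda>c. (c i, (\<lambda>j. c j - (c i / u i) * u j))"
  have "bij_betw ?f C (UNIV \<times> ?Z)"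
  proof (rule bij_betw_byWitness[where f' = "\<lambda>(x,z). (\<lambda>j. z j + (x / u i) * u j)"])
    show "\<forall>c\<in>C. (\<lambda>(x,z). (\<lambda>j. z j + (x / u i) * u j)) (?f c) = c" by auto
    show "\<forall>p\<in>UNIV \<times> ?Z. ?f ((\<lambda>(x,z). (\<lambda>j. z j + (x / u i) * u j)) p) = p"
      using u by auto
    have "\<forall>x\<in>C. (\<lambda>j. x j - (x i / u i) * u j) \<in> C" using lc_sub[OF lc _ u(1)] by blast
    then show "?f ` C \<subseteq> UNIV \<times> ?Z" using u by auto
    have "\<forall>x. \<forall>z\<in>C. (\<lambda>j. z j + (x / u i) * u j) \<in> C" using lc_lin[OF lc _ u(1)] by blast
    then show "(\<lambda>(x,z). (\<lambda>j. z j + (x / u i) * u j)) ` (UNIV \<times> ?Z) \<subseteq> C"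
      by auto
  qed
  then have "card C = card ((UNIV::'a set) \<times> ?Z)" by (rule bij_betw_same_card)
  then show ?thesis by (simp add: card_cartesian_product)
qed

lemma card_filter_sum: "finite A \<Longrightarrow> card {x\<in>A. P x} = (\<Sum>x\<in>A. if P x then 1 else 0)"
  by (simp add: sum.If_cases Int_def conj_commute)

lemma moment1:
  fixes C :: "(nat \<Rightarrow> 'a::{finite,field}) set"
  assumes lc: "linear_code n C" and fin: "finite C"
  shows "(\<Sum>c\<in>C. n - wt n c) = (\<Sum>i<n. card {c\<in>C. c i = 0})"
proof -
  have "n - wt n c = card {i\<in>{..<n}. c i = 0}" for c
  proof -
    have e: "{i\<in>{..<n}. c i = 0} = {..<n} - {i\<in>{..<n}. c i \<noteq> 0}" by auto
    have sub: "{i\<in>{..<n}. c i \<noteq> 0} \<subseteq> {..<n}" by auto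
    have "card {i\<in>{..<n}. c i = 0} = card {..<n} - card {i\<in>{..<n}. c i \<noteq> 0}"
      by (simp only: e card_Diff_subset[OF finite_subset[OF sub finite_lessThan] sub])
    then show ?thesis unfolding wt_def by simp
  qed
  note h = this
  have "(\<Sum>c\<in>C. n - wt n c) = (\<Sum>c\<in>C. \<Sum>i<n. if c i = 0 then 1 else 0)"
    by (rule sum.cong[OF refl], subst h, rule card_filter_sum[OF finite_lessThan])
  also have "\<dots> = (\<Sum>i<n. \<Sum>c\<in>C. if c i = 0 then 1 else 0)" by (rule sum.swap)
  also have "\<dots> = (\<Sum>i<n. card {c\<in>C. c i = 0})" using fin by (simp add: card_filter_sum)
  finally show ?thesis .
qed




lemma full_wt_nz:
  assumes "wt n c = n" "i < n" shows "c i \<noteq> 0"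
proof -
  have sub: "{i\<in>{..<n}. c i \<noteq> 0} \<subseteq> {..<n}" by auto
  have "card {i\<in>{..<n}. c i \<noteq> 0} = card {..<n}" using assms(1) unfolding wt_def by simp
  then have "{i\<in>{..<n}. c i \<noteq> 0} = {..<n}" using card_subset_eq[OF finite_lessThan sub] by blast
  then show ?thesis using assms(2) by blast
qed

lemma a_value:
  fixes C :: "(nat \<Rightarrow> 'a::{finite,field}) set" and a :: real
  assumes lc: "linear_code n C" and ev: "n = 2*N" and N: "N > 0" and a: "a \<noteq> 0"
    and H: "weight_enum n C = [:a, 0, 1:] ^ N"
  shows "a = real CARD('a) - 1"
proof -
  have fin: "finite C" using lc finite_Fqn finite_subset unfolding linear_code_def by blast
  note E = enum_facts[OF fin ev N a H]
  obtain c0 where c0: "c0 \<in> C" "wt n c0 = n" using E(1) by blast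
  have "\<And>i. i < n \<Longrightarrow> card C = CARD('a) * card {c\<in>C. c i = 0}"
    using lc_fiber[OF lc c0(1)] full_wt_nz[OF c0(2)] by blast
  then have "CARD('a) * (\<Sum>i<n. card {c\<in>C. c i = 0}) = (\<Sum>i<n. card C)"
    by (simp add: sum_distrib_left)
  then have "CARD('a) * (\<Sum>c\<in>C. n - wt n c) = n * card C"
    using moment1[OF lc fin] by simp
  then have "real CARD('a) * real (\<Sum>c\<in>C. n - wt n c) = real n * real (card C)"
    by (metis of_nat_mult)
  then have eq: "real CARD('a) * (real N * 2 * (1+a)^(N-1)) = real n * (1+a)^N"
    using E(4) E(5) by simp
  have "card C \<noteq> 0" using fin lc_zero[OF lc] by auto
  then have nz: "(1+a)^N \<noteq> 0" unfolding E(4)[symmetric] by simp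
  have pw: "(1+a)^N = (1+a) * (1+a)^(N-1)" using N by (cases N) simp_all
  then have nz2: "(1+a)^(N-1) \<noteq> 0" using nz by auto
  have rn: "real n = real N * 2" using ev by simp
  have "(real N * 2) * (real CARD('a) * (1+a)^(N-1)) = (real N * 2) * ((1+a) * (1+a)^(N-1))"
    using eq unfolding rn pw by (simp only: ac_simps)
  then have "real CARD('a) * (1+a)^(N-1) = (1+a) * (1+a)^(N-1)"
    using N by simp
  then have "real CARD('a) = 1 + a" using nz2 by (rule mult_right_cancel[THEN iffD1, rotated])
  then show ?thesis by simp
qed



definition supp :: "nat \<Rightarrow> (nat \<Rightarrow> 'a::zero) \<Rightarrow> nat set" where
  "supp n c = {i\<in>{..<n}. c i \<noteq> 0}"

lemma wt_supp: "wt n c = card (supp n c)" unfolding wt_def supp_def by simp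

lemma supp_sub: "supp n c \<subseteq> {..<n}" unfolding supp_def by auto

lemma finite_supp[simp]: "finite (supp n c)" using supp_sub finite_subset by blast

lemma zero_of_wt0:
  assumes lc: "linear_code n C" and c: "c \<in> C" and w: "wt n c = 0"
  shows "c = (\<lambda>_. 0)"
proof
  fix i
  have "supp n c = {}" using w by (simp add: wt_supp)
  then have "\<And>i. i < n \<Longrightarrow> c i = 0" unfolding supp_def by auto
  then show "c i = 0"
    using lc_Fqn[OF lc c, of i] by (cases "i < n") auto
qed

lemma nz_in_supp:
  assumes lc: "linear_code n C" and c: "c \<in> C" and nz: "c i \<noteq> 0"
  shows "i \<in> supp n c"
proof -
  have "\<not> n \<le> i" using lc_Fqn[OF lc c, of i] nz by blast
  then show ?thesis using nz unfolding supp_def by simp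
qed

lemma notin_supp: "linear_code n C \<Longrightarrow> c \<in> C \<Longrightarrow> i \<notin> supp n c \<Longrightarrow> c i = 0"
  using nz_in_supp by blast

lemma line_lemma:
  fixes C :: "(nat \<Rightarrow> 'a::{finite,field}) set"
  assumes lc: "linear_code n C" and evw: "\<And>c. c \<in> C \<Longrightarrow> even (wt n c)"
    and u: "u \<in> C" and v: "v \<in> C" and su: "supp n u = {i,j}" and sv: "supp n v = {i,j}" and ij: "i \<noteq> j"
  shows "v = (\<lambda>k. (v i / u i) * u k)"
proof -
  let ?w = "\<lambda>k. v k - (v i / u i) * u k"
  have wC: "?w \<in> C" by (rule lc_sub[OF lc v u])
  have ui: "u i \<noteq> 0" using su unfolding supp_def by auto
  have "supp n ?w \<subseteq> {j}"
  proof
    fix k assume k: "k \<in> supp n ?w"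
    show "k \<in> {j}"
    proof (rule ccontr)
      assume "k \<notin> {j}"
      moreover have "k \<noteq> i" using k ui unfolding supp_def by auto
      ultimately have "k \<notin> supp n u" "k \<notin> supp n v" using su sv by auto
      then have "u k = 0" "v k = 0" using notin_supp[OF lc u] notin_supp[OF lc v] by auto
      then show False using k unfolding supp_def by auto
    qed
  qed
  then have "card (supp n ?w) \<le> card {j}" by (intro card_mono) simp_all
  then have "wt n ?w \<le> 1" unfolding wt_supp by simp
  moreover have "even (wt n ?w)" using evw[OF wC] .
  ultimately have "wt n ?w = 0" by presburger
  then have eqw: "?w = (\<lambda>_. 0)" using zero_of_wt0[OF lc wC] by blast
  show ?thesis
  proof
    fix k
    have "?w k = (\<lambda>_. 0) k" by (rule fun_cong[OF eqw])
    then have "v k - (v i / u i) * u k = 0" by (simp only:)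
    then show "v k = (v i / u i) * u k" by (rule eq_iff_diff_eq_0[THEN iffD2])
  qed
qed


lemma exists_avoid:
  assumes "CARD('a::{finite,field}) \<noteq> 2"
  shows "\<exists>x::'a. x \<noteq> 0 \<and> x \<noteq> b"
proof (rule ccontr)
  assume "\<not> ?thesis"
  then have "(UNIV::'a set) \<subseteq> {0,b}" by auto
  then have "CARD('a) \<le> card {0::'a,b}" by (intro card_mono) simp_all
  also have "\<dots> \<le> 2" by (simp add: card_insert_le_m1)
  finally have le: "CARD('a) \<le> 2" .
  have "card {0::'a,1} \<le> CARD('a)" by (intro card_mono) simp_all
  then have "2 \<le> CARD('a)" by simp
  then show False using le assms by simp
qed

lemma supp_pair:
  assumes "wt n u = 2" "j \<in> supp n u"
  obtains i where "supp n u = {i,j}" "i \<noteq> j"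
proof -
  obtain x y where xy: "supp n u = {x,y}" "x \<noteq> y" using assms(1) unfolding wt_supp card_2_iff by blast
  show ?thesis
  proof (cases "j = x")
    case True then show ?thesis using that xy by (metis insert_commute)
  next
    case False then have "j = y" using assms(2) xy by auto
    then show ?thesis using that xy by blast
  qed
qed

lemma disj_lemma:
  fixes C :: "(nat \<Rightarrow> 'a::{finite,field}) set"
  assumes lc: "linear_code n C" and evw: "\<And>c. c \<in> C \<Longrightarrow> even (wt n c)"
    and q: "CARD('a) \<noteq> 2"
    and u: "u \<in> C" "wt n u = 2" and v: "v \<in> C" "wt n v = 2" and ne: "supp n u \<noteq> supp n v"
  shows "supp n u \<inter> supp n v = {}"
proof (rule ccontr)
  assume "supp n u \<inter> supp n v \<noteq> {}"
  then obtain j where j: "j \<in> supp n u" "j \<in> supp n v" by blast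
  obtain i where i: "supp n u = {i,j}" "i \<noteq> j" using supp_pair[OF u(2) j(1)] by blast
  obtain k where k: "supp n v = {k,j}" "k \<noteq> j" using supp_pair[OF v(2) j(2)] by blast
  have ik: "i \<noteq> k" using i k ne by auto
  have ui: "u i \<noteq> 0" "u j \<noteq> 0" "i < n" "j < n" using i unfolding supp_def by auto
  have vk: "v k \<noteq> 0" "v j \<noteq> 0" "k < n" using k unfolding supp_def by auto
  have vi: "v i = 0" using notin_supp[OF lc v(1), of i] k i ik by auto
  have uk: "u k = 0" using notin_supp[OF lc u(1), of k] k i ik by auto
  obtain t :: 'a where t: "t \<noteq> 0" "t \<noteq> - u j / v j" using exists_avoid[OF q] by blast
  let ?w = "\<lambda>x. u x + t * v x"
  have wC: "?w \<in> C" by (rule lc_lin[OF lc u(1) v(1)])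
  have "supp n ?w = {i,j,k}"
  proof
    show "supp n ?w \<subseteq> {i,j,k}"
    proof
      fix x assume x: "x \<in> supp n ?w"
      then have "u x \<noteq> 0 \<or> v x \<noteq> 0" unfolding supp_def by auto
      then have "x \<in> supp n u \<or> x \<in> supp n v" using nz_in_supp[OF lc u(1)] nz_in_supp[OF lc v(1)] by blast
      then show "x \<in> {i,j,k}" using i k by auto
    qed
  next
    have "u j + t * v j \<noteq> 0"
    proof
      assume "u j + t * v j = 0"
      then have "t = - u j / v j" using vk(2) by (simp add: field_simps add_eq_0_iff)
      then show False using t by simp
    qed
    then show "{i,j,k} \<subseteq> supp n ?w" using ui vk vi uk t unfolding supp_def by auto
  qed
  then have "wt n ?w = 3" unfolding wt_supp using i k ik by auto
  then show False using evw[OF wC] by simp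
qed




lemma card_ge2: "2 \<le> CARD('a::{finite,field})"
proof -
  have "card {0::'a,1} \<le> CARD('a)" by (intro card_mono) simp_all
  then show ?thesis by simp
qed

lemma fiber_lemma:
  fixes C :: "(nat \<Rightarrow> 'a::{finite,field}) set"
  assumes lc: "linear_code n C" and evw: "\<And>c. c \<in> C \<Longrightarrow> even (wt n c)"
    and u: "u \<in> C" "wt n u = 2"
  shows "card {c\<in>{c\<in>C. wt n c = 2}. supp n c = supp n u} = CARD('a) - 1"
proof -
  obtain i j where ij: "supp n u = {i,j}" "i \<noteq> j" using u(2) unfolding wt_supp card_2_iff by blast
  have ui: "u i \<noteq> 0" using ij unfolding supp_def by auto
  have supp_sc: "supp n (\<lambda>k. t * u k) = supp n u" if "t \<noteq> 0" for t
    using that unfolding supp_def by auto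
  have eq: "{c\<in>{c\<in>C. wt n c = 2}. supp n c = supp n u} = (\<lambda>t. \<lambda>k. t * u k) ` (UNIV - {0})"
  proof
    show "{c\<in>{c\<in>C. wt n c = 2}. supp n c = supp n u} \<subseteq> (\<lambda>t. \<lambda>k. t * u k) ` (UNIV - {0})"
    proof
      fix c assume c: "c \<in> {c\<in>{c\<in>C. wt n c = 2}. supp n c = supp n u}"
      then have cC: "c \<in> C" and sc: "supp n c = {i,j}" using ij by auto
      have "c = (\<lambda>k. (c i / u i) * u k)" using line_lemma[OF lc evw u(1) cC ij(1) sc ij(2)] .
      moreover have "c i \<noteq> 0" using sc unfolding supp_def by auto
      then have "c i / u i \<noteq> 0" using ui by simp
      ultimately show "c \<in> (\<lambda>t. \<lambda>k. t * u k) ` (UNIV - {0})" by blast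
    qed
  next
    show "(\<lambda>t. \<lambda>k. t * u k) ` (UNIV - {0}) \<subseteq> {c\<in>{c\<in>C. wt n c = 2}. supp n c = supp n u}"
    proof
      fix c assume "c \<in> (\<lambda>t. \<lambda>k. t * u k) ` (UNIV - {0})"
      then obtain t where t: "t \<noteq> 0" "c = (\<lambda>k. t * u k)" by blast
      have "c \<in> C" using t lc_smult[OF lc u(1)] by blast
      moreover have "supp n c = supp n u" using t supp_sc by blast
      ultimately show "c \<in> {c\<in>{c\<in>C. wt n c = 2}. supp n c = supp n u}" using u(2) by (simp add: wt_supp)
    qed
  qed
  have inj: "inj_on (\<lambda>t. \<lambda>k. t * u k) (UNIV - {0})"
  proof (rule inj_onI)
    fix t t' assume "(\<lambda>k. t * u k) = (\<lambda>k. t' * u k)"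
    then have "t * u i = t' * u i" by metis
    then show "t = t'" using ui by simp
  qed
  show ?thesis unfolding eq card_image[OF inj] by (simp add: card_Diff_singleton)
qed

lemma pairs_cover:
  fixes C :: "(nat \<Rightarrow> 'a::{finite,field}) set"
  assumes lc: "linear_code n C" and evw: "\<And>c. c \<in> C \<Longrightarrow> even (wt n c)"
    and q: "CARD('a) \<noteq> 2" and fin: "finite C" and ev: "n = 2*N"
    and cnt: "card {c\<in>C. wt n c = 2} = N * (CARD('a) - 1)"
  defines "T \<equiv> supp n ` {c\<in>C. wt n c = 2}"
  shows "finite T" "card T = N" "\<Union>T = {..<n}" "\<And>s. s \<in> T \<Longrightarrow> card s = 2"
    "\<And>s s'. s \<in> T \<Longrightarrow> s' \<in> T \<Longrightarrow> s \<noteq> s' \<Longrightarrow> s \<inter> s' = {}"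
proof -
  let ?S = "{c\<in>C. wt n c = 2}"
  show finT: "finite T" unfolding T_def using fin by simp
  show c2: "\<And>s. s \<in> T \<Longrightarrow> card s = 2" unfolding T_def by (auto simp: wt_supp)
  show dj: "\<And>s s'. s \<in> T \<Longrightarrow> s' \<in> T \<Longrightarrow> s \<noteq> s' \<Longrightarrow> s \<inter> s' = {}"
    unfolding T_def using disj_lemma[OF lc evw q] by blast
  have fibers: "\<And>s. s \<in> T \<Longrightarrow> card {c\<in>?S. supp n c = s} = CARD('a) - 1"
    unfolding T_def using fiber_lemma[OF lc evw] by blast
  define F where "F s = {c\<in>?S. supp n c = s}" for s
  have U: "?S = (\<Union>s\<in>T. F s)" unfolding T_def F_def by auto
  have finF: "\<forall>s\<in>T. finite (F s)" unfolding F_def using fin by auto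
  have djF: "\<forall>s\<in>T. \<forall>s'\<in>T. s \<noteq> s' \<longrightarrow> F s \<inter> F s' = {}" unfolding F_def by auto
  have "card ?S = (\<Sum>s\<in>T. card (F s))"
    unfolding U by (rule card_UN_disjoint[OF finT finF djF])
  also have "\<dots> = card T * (CARD('a) - 1)" using fibers unfolding F_def by simp
  finally have cT: "card T * (CARD('a) - 1) = N * (CARD('a) - 1)" using cnt by linarith
  have pos: "CARD('a) - 1 \<noteq> 0" using card_ge2[where 'a='a] by simp
  from cT have "card T = N \<or> CARD('a) - 1 = 0" by (simp only: mult_cancel2)
  then show cTN: "card T = N" using pos by blast
  have "card (\<Union>T) = sum card T"
    by (rule card_Union_disjoint) (use dj in \<open>auto simp: pairwise_def disjnt_def T_def\<close>)
  also have "\<dots> = 2 * N" using c2 cTN by simp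
  finally have cU: "card (\<Union>T) = n" using ev by simp
  have sub: "\<Union>T \<subseteq> {..<n}" unfolding T_def using supp_sub by blast
  show "\<Union>T = {..<n}" using card_subset_eq[OF finite_lessThan sub] cU by simp
qed



lemma card_rep_sum_code:
  assumes ev: "n = 2*N"
  shows "card (rep_sum_code n :: (nat \<Rightarrow> 'a::{finite,field}) set) = CARD('a) ^ N"
proof -
  define g :: "(nat \<Rightarrow> 'a) \<Rightarrow> nat \<Rightarrow> 'a" where "g m = (\<lambda>j. if j < n then m (j div 2) else 0)" for m
  have R: "rep_sum_code n = g ` ({..<N} \<rightarrow>\<^sub>E (UNIV::'a set))"
  proof
    show "rep_sum_code n \<subseteq> g ` ({..<N} \<rightarrow>\<^sub>E UNIV)"
    proof
      fix v :: "nat \<Rightarrow> 'a" assume "v \<in> rep_sum_code n"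
      then obtain m where m: "v = (\<lambda>j. if j < n then m (j div 2) else 0)" unfolding rep_sum_code_def by blast
      have "v = g (restrict m {..<N})" unfolding m g_def using ev by (auto simp: fun_eq_iff)
      moreover have "restrict m {..<N} \<in> {..<N} \<rightarrow>\<^sub>E UNIV" by simp
      ultimately show "v \<in> g ` ({..<N} \<rightarrow>\<^sub>E UNIV)" by blast
    qed
  next
    show "g ` ({..<N} \<rightarrow>\<^sub>E UNIV) \<subseteq> rep_sum_code n" unfolding g_def rep_sum_code_def by blast
  qed
  have inj: "inj_on g ({..<N} \<rightarrow>\<^sub>E (UNIV::'a set))"
  proof (rule inj_onI)
    fix m m' assume m: "m \<in> {..<N} \<rightarrow>\<^sub>E (UNIV::'a set)" and m': "m' \<in> {..<N} \<rightarrow>\<^sub>E (UNIV::'a set)"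
      and e: "g m = g m'"
    show "m = m'"
    proof (rule PiE_ext[OF m m'])
      fix l assume "l \<in> {..<N}"
      then have "2*l < n" using ev by simp
      then show "m l = m' l" using fun_cong[OF e, of "2*l"] unfolding g_def by simp
    qed
  qed
  show ?thesis unfolding R card_image[OF inj] by (simp add: card_PiE)
qed



lemma construction:
  fixes C :: "(nat \<Rightarrow> 'a::{finite,field}) set" and T :: "nat set set"
  assumes lc: "linear_code n C" and fin: "finite C" and ev: "n = 2*N"
    and cardC: "card C = CARD('a) ^ N"
    and finT: "finite T" and cT: "card T = N" and cov: "\<Union>T = {..<n}"
    and c2: "\<And>s. s \<in> T \<Longrightarrow> card s = 2"
    and dj: "\<And>s s'. s \<in> T \<Longrightarrow> s' \<in> T \<Longrightarrow> s \<noteq> s' \<Longrightarrow> s \<inter> s' = {}"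
    and wit: "\<And>s. s \<in> T \<Longrightarrow> \<exists>c\<in>C. supp n c = s"
  shows "monomially_equivalent n C (rep_sum_code n)"
proof -
  obtain e where e: "bij_betw e {0..<N} T" using ex_bij_betw_nat_finite[OF finT] cT by blast
  have eT: "\<And>l. l < N \<Longrightarrow> e l \<in> T" using e unfolding bij_betw_def by auto
  have edj: "\<And>l l'. l < N \<Longrightarrow> l' < N \<Longrightarrow> l \<noteq> l' \<Longrightarrow> e l \<inter> e l' = {}"
  proof -
    fix l l' assume "l < N" "l' < N" "l \<noteq> l'"
    then have "e l \<noteq> e l'" using e unfolding bij_betw_def inj_on_def by auto
    then show "e l \<inter> e l' = {}" using dj eT \<open>l < N\<close> \<open>l' < N\<close> by blast
  qed
  have esub: "\<And>l. l < N \<Longrightarrow> e l \<subseteq> {..<n}" using eT cov by blast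
  define lo where "lo l = Min (e l)" for l
  define hi where "hi l = Max (e l)" for l
  have pair: "e l = {lo l, hi l} \<and> lo l < hi l" if l: "l < N" for l
  proof -
    obtain x y where xy: "e l = {x,y}" "x \<noteq> y" using c2[OF eT[OF l]] unfolding card_2_iff by blast
    have "lo l = min x y" "hi l = max x y" unfolding lo_def hi_def xy by auto
    then show ?thesis using xy by (auto simp: min_def max_def)
  qed
  define w where "w l = (SOME c. c \<in> C \<and> supp n c = e l)" for l
  have w: "w l \<in> C \<and> supp n (w l) = e l" if l: "l < N" for l
    unfolding w_def by (rule someI_ex[of "\<lambda>c. c \<in> C \<and> supp n c = e l"]) (use wit[OF eT[OF l]] in blast)
  have wnz: "\<And>l p. l < N \<Longrightarrow> p \<in> e l \<Longrightarrow> w l p \<noteq> 0"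
    using w unfolding supp_def by blast
  have wz: "\<And>l p. l < N \<Longrightarrow> p \<notin> e l \<Longrightarrow> w l p = 0"
    using w notin_supp[OF lc] by metis
  define \<sigma> where "\<sigma> j = (if j < n then (if even j then lo (j div 2) else hi (j div 2)) else j)" for j
  define d where "d j = (if even j then w (j div 2) (hi (j div 2)) else w (j div 2) (lo (j div 2)))" for j
  have jN: "\<And>j. j < n \<Longrightarrow> j div 2 < N" using ev by auto
  have \<sigma>in: "\<And>j. j < n \<Longrightarrow> \<sigma> j \<in> e (j div 2)" unfolding \<sigma>_def using pair jN by auto
  have \<sigma>lt: "\<And>j. j < n \<Longrightarrow> \<sigma> j < n" using \<sigma>in esub jN by blast
  have \<sigma>inj: "inj_on \<sigma> {..<n}"
  proof (rule inj_onI)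
    fix j j' assume j0: "j \<in> {..<n}" and j0': "j' \<in> {..<n}" and eq: "\<sigma> j = \<sigma> j'"
    have j: "j < n" and j': "j' < n" using j0 j0' by auto
    have l: "j div 2 = j' div 2"
    proof (rule ccontr)
      assume "j div 2 \<noteq> j' div 2"
      then have D: "e (j div 2) \<inter> e (j' div 2) = {}" using edj[OF jN[OF j] jN[OF j']] by simp
      have A: "\<sigma> j \<in> e (j div 2)" by (rule \<sigma>in[OF j])
      have B: "\<sigma> j \<in> e (j' div 2)" unfolding eq by (rule \<sigma>in[OF j'])
      have "\<sigma> j \<in> e (j div 2) \<inter> e (j' div 2)" using A B by (rule IntI)
      then show False unfolding D by simp
    qed
    have "even j = even j'"
    proof (rule ccontr)
      assume ne: "even j \<noteq> even j'"
      have lh: "lo (j div 2) < hi (j div 2)" using pair[OF jN[OF j]] by simp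
      have s1: "\<sigma> j = (if even j then lo (j div 2) else hi (j div 2))" using j by (simp add: \<sigma>_def)
      have s2: "\<sigma> j' = (if even j' then lo (j div 2) else hi (j div 2))" using j' l by (simp add: \<sigma>_def)
      show False
      proof (cases "even j")
        case True then have "odd j'" using ne by simp
        then show False using True s1 s2 eq lh by simp
      next
        case False then have "even j'" using ne by simp
        then show False using False s1 s2 eq lh by simp
      qed
    qed
    then show "j = j'" using l by presburger
  qed
  have \<sigma>img: "\<sigma> ` {..<n} = {..<n}"
    by (rule endo_inj_surj[OF finite_lessThan _ \<sigma>inj]) (use \<sigma>lt in auto)
  have perm: "\<sigma> permutes {..<n}"
  proof (rule bij_imp_permutes)
    show "bij_betw \<sigma> {..<n} {..<n}" using \<sigma>inj \<sigma>img by (simp add: bij_betw_def)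
  next
    fix x assume "x \<notin> {..<n}" then show "\<sigma> x = x" by (simp add: \<sigma>_def)
  qed
  have dnz: "\<And>i. i < n \<Longrightarrow> d i \<noteq> 0" unfolding d_def using wnz pair jN by auto
  define \<Phi> where "\<Phi> v = (\<lambda>i. if i < n then d i * v (\<sigma> i) else 0)" for v :: "nat \<Rightarrow> 'a"
  have Rsub: "rep_sum_code n \<subseteq> \<Phi> ` C"
  proof
    fix v :: "nat \<Rightarrow> 'a" assume "v \<in> rep_sum_code n"
    then obtain m where m: "v = (\<lambda>j. if j < n then m (j div 2) else 0)" unfolding rep_sum_code_def by blast
    define coef where "coef l = m l / (w l (lo l) * w l (hi l))" for l
    define c where "c p = (\<Sum>l\<in>{..<N}. coef l * w l p)" for p
    have cC: "c \<in> C" unfolding c_def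
      by (rule lc_sum[OF lc finite_lessThan]) (use lc_smult[OF lc] w in auto)
    have "\<Phi> c = v"
    proof
      fix i show "\<Phi> c i = v i"
      proof (cases "i < n")
        case False then show ?thesis unfolding \<Phi>_def m by simp
      next
        case True
        let ?l = "i div 2"
        have lN: "?l < N" using jN True .
        have others: "coef l * w l (\<sigma> i) = 0" if "l \<in> {..<N} - {?l}" for l
        proof -
          have "\<sigma> i \<notin> e l" using edj[of ?l l] that lN \<sigma>in[OF True] by auto
          then show ?thesis using wz that by auto
        qed
        have "c (\<sigma> i) = coef ?l * w ?l (\<sigma> i) + (\<Sum>l\<in>{..<N} - {?l}. coef l * w l (\<sigma> i))"
          unfolding c_def using sum.remove[of "{..<N}" ?l] lN by auto
        also have "\<dots> = coef ?l * w ?l (\<sigma> i)" using sum.neutral[of "{..<N} - {?l}", OF ballI[OF others]] by simp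
        finally have cs: "c (\<sigma> i) = coef ?l * w ?l (\<sigma> i)" .
        have nz1: "w ?l (lo ?l) \<noteq> 0" "w ?l (hi ?l) \<noteq> 0" using wnz pair lN by auto
        show ?thesis
        proof (cases "even i")
          case True
          have s: "\<sigma> i = lo ?l" using \<open>i < n\<close> True by (simp add: \<sigma>_def)
          have "\<Phi> c i = d i * c (\<sigma> i)" using \<open>i < n\<close> by (simp add: \<Phi>_def)
          also have "\<dots> = w ?l (hi ?l) * (coef ?l * w ?l (lo ?l))" using True cs s by (simp add: d_def)
          also have "\<dots> = m ?l" using nz1 by (simp add: coef_def field_simps)
          finally show ?thesis using \<open>i < n\<close> by (simp add: m)
        next
          case False
          have s: "\<sigma> i = hi ?l" using \<open>i < n\<close> False by (simp add: \<sigma>_def)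
          have "\<Phi> c i = d i * c (\<sigma> i)" using \<open>i < n\<close> by (simp add: \<Phi>_def)
          also have "\<dots> = w ?l (lo ?l) * (coef ?l * w ?l (hi ?l))" using False cs s by (simp add: d_def)
          also have "\<dots> = m ?l" using nz1 by (simp add: coef_def field_simps)
          finally show ?thesis using \<open>i < n\<close> by (simp add: m)
        qed
      qed
    qed
    then show "v \<in> \<Phi> ` C" using cC by blast
  qed
  have Finj: "inj_on \<Phi> C"
  proof (rule inj_onI)
    fix u v assume u: "u \<in> C" and v: "v \<in> C" and eq: "\<Phi> u = \<Phi> v"
    show "u = v"
    proof
      fix p show "u p = v p"
      proof (cases "p < n")
        case True
        then obtain i where i: "i < n" "\<sigma> i = p" using \<sigma>img by (metis imageE lessThan_iff)
        have "d i * u (\<sigma> i) = d i * v (\<sigma> i)" using fun_cong[OF eq, of i] i unfolding \<Phi>_def by simp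
        then show ?thesis using dnz[OF i(1)] i by simp
      next
        case False then show ?thesis using lc_Fqn[OF lc u] lc_Fqn[OF lc v] by simp
      qed
    qed
  qed
  have "card (\<Phi> ` C) = CARD('a) ^ N" using card_image[OF Finj] cardC by simp
  moreover have "card (rep_sum_code n :: (nat \<Rightarrow> 'a) set) = CARD('a) ^ N" by (rule card_rep_sum_code[OF ev])
  ultimately have "rep_sum_code n = \<Phi> ` C"
    using card_subset_eq[OF finite_imageI[OF fin] Rsub] by simp
  then show ?thesis unfolding monomially_equivalent_def \<Phi>_def using perm dnz by blast
qed


theorem lemma3p3:
  fixes C :: "(nat \<Rightarrow> 'a::{finite,field}) set" and n :: nat and a :: real
  assumes "linear_code n C"
    and "even n" and "n > 0"
    and "CARD('a) \<noteq> 2"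
    and "a \<noteq> 0"
    and "weight_enum n C = [:a, 0, 1:] ^ (n div 2)"
  shows "a = real CARD('a) - 1 \<and> monomially_equivalent n C (rep_sum_code n)"
proof -
  note lc = assms(1)
  define N where "N = n div 2"
  have ev: "n = 2*N" using assms(2) unfolding N_def by simp
  have N: "N > 0" using ev assms(3) by simp
  have H: "weight_enum n C = [:a, 0, 1:] ^ N" using assms(6) unfolding N_def .
  have fin: "finite C" using lc finite_Fqn finite_subset unfolding linear_code_def by blast
  have aval: "a = real CARD('a) - 1" by (rule a_value[OF lc ev N assms(5) H])
  note E = enum_facts[OF fin ev N assms(5) H]
  have q1: "1 \<le> CARD('a)" using card_ge2[where 'a='a] by simp
  have "real (card {c\<in>C. wt n c = 2}) = real (N * (CARD('a) - 1))"
    using E(3) aval q1 by (simp add: of_nat_diff)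
  then have cnt: "card {c\<in>C. wt n c = 2} = N * (CARD('a) - 1)" by (simp only: of_nat_eq_iff)
  have "real (card C) = real (CARD('a) ^ N)" using E(4) aval by simp
  then have cardC: "card C = CARD('a) ^ N" by (simp only: of_nat_eq_iff)
  define T where "T = supp n ` {c\<in>C. wt n c = 2}"
  note P = pairs_cover[OF lc E(2) assms(4) fin ev cnt, folded T_def]
  have wit: "\<And>s. s \<in> T \<Longrightarrow> \<exists>c\<in>C. supp n c = s" unfolding T_def by blast
  have "monomially_equivalent n C (rep_sum_code n)"
    by (rule construction[OF lc fin ev cardC P(1) P(2) P(3) P(4) P(5) wit])
  then show ?thesis using aval by blast
qed

end
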